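(* Let $(M,\mathcal{A},\nu)$ be a standard finite measure space, let $\mathcal{B}$ be a standard sub-$\sigma$-algebra of $\mathcal{A}$, and let $X$ be a nonnegative internal ${}^*\mathcal{A}$-measurable function on ${}^*M$. Suppose that for every real $\epsilon>0$ there exists a real $k$ such that $${}^*E(X; X\ge k)\;\equiv\;{}^*\!\!\int_{\{X\ge k\}} X\,d\,{}^*\nu \;<\;\epsilon .$$ Then there exists a standard nonnegative $\nu$-integrable function $X^\infty$ on $M$, unique up to $\nu$-a.e. equality, such that for every (standard) $A\in\mathcal{A}$ and every (standard) bounded $\mathcal{A}$-measurable function $Y$ on $M$: $$E(X^\infty;A)\simeq {}^*E(X;{}^*A),\qquad E(YX^\infty;A)\simeq {}^*E({}^*Y\,X;{}^*A),\qquad E\big(E(X^\infty\mid\mathcal{B});A\big)\simeq {}^*E\big({}^*E(X\mid{}^*\mathcal{B});{}^*A\big).$$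
   Context: We work in nonstandard analysis: a nonstandard extension ${}^*$ of a sufficiently large universe satisfying the Transfer Principle and the Concurrence (saturation/enlargement) Principle. Objects of the original universe are called standard; ${}^*a$ denotes the nonstandard extension of $a$; ${}^*\nu$, ${}^*\mathcal{A}$, ${}^*\int$, ${}^*E$ denote the transferred measure, $\sigma$-algebra, integral, expectation and conditional expectation. For hyperreals $a,b$, $a\simeq b$ means $a-b$ is infinitesimal. For a measurable set $A$ and integrable $Z$, $E(Z;A)=\int_A Z\,d\nu$ (for a finite measure, "expectation" means integral w.r.t. $\nu$); similarly ${}^*E(Z;{}^*A)$ is the internal integral over ${}^*A$. $E(\cdot\mid\mathcal{B})$ is conditional expectation with respect to $\mathcal{B}$ (relative to $\nu$). *)

theory Defs
  imports "HOL-Probability.Probability"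
begin

text \<open>Ultrapower model of the nonstandard extension: the index set is the type 'i
  and U is an ultrafilter on it. A hyperreal is represented by a function 'i => real
  (modulo U-a.e. equality); an internal function on *M by a family 'i => M => real;
  internal integrals/conditional expectations are computed coordinatewise.\<close>

definition is_ultrafilter :: "'i filter \<Rightarrow> bool" where
  "is_ultrafilter U \<longleftrightarrow> U \<noteq> bot \<and> (\<forall>P. eventually P U \<or> eventually (\<lambda>i. \<not> P i) U)"

definition ns_approx :: "'i filter \<Rightarrow> real \<Rightarrow> ('i \<Rightarrow> real) \<Rightarrow> bool" where
  "ns_approx U r a \<longleftrightarrow> (\<forall>e>0. eventually (\<lambda>i. \<bar>r - a i\<bar> < e) U)"

end

theory Submission
  imports Defs
begin

lemma ns_approx_iff: "ns_approx U r a \<longleftrightarrow> (a \<longlongrightarrow> r) U"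
  unfolding ns_approx_def tendsto_iff dist_real_def by (simp add: abs_minus_commute)

lemma ultra_lim_exists:
  fixes a :: "'i \<Rightarrow> real"
  assumes ultra: "is_ultrafilter U" and bd: "eventually (\<lambda>i. \<bar>a i\<bar> \<le> K) U"
  shows "\<exists>r. (a \<longlongrightarrow> r) U"
proof -
  have Ub: "U \<noteq> bot" using ultra unfolding is_ultrafilter_def by auto
  have cpt: "compact {-K..K}" by simp
  have F1: "filtermap a U \<noteq> bot" using Ub by (simp add: filtermap_bot_iff)
  have F2: "eventually (\<lambda>x. x \<in> {-K..K}) (filtermap a U)"
    using bd by (auto simp: eventually_filtermap abs_le_iff elim: eventually_mono)
  obtain x where x: "inf (nhds x) (filtermap a U) \<noteq> bot"
    using cpt[unfolded compact_filter] F1 F2 by blast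
  have "(a \<longlongrightarrow> x) U"
    unfolding tendsto_def
  proof (intro allI impI)
    fix S :: "real set" assume S: "open S" "x \<in> S"
    show "eventually (\<lambda>i. a i \<in> S) U"
    proof (rule ccontr)
      assume nS: "\<not> eventually (\<lambda>i. a i \<in> S) U"
      then have "eventually (\<lambda>i. \<not> a i \<in> S) U" using ultra unfolding is_ultrafilter_def by blast
      then have e1: "eventually (\<lambda>y. y \<notin> S) (filtermap a U)" by (simp add: eventually_filtermap)
      have e2: "eventually (\<lambda>y. y \<in> S) (nhds x)" using S by (rule eventually_nhds_in_open)
      have "eventually (\<lambda>y. False) (inf (nhds x) (filtermap a U))"
        unfolding eventually_inf using e1 e2 by blast
      then show False using x by (simp add: eventually_False)
    qed
  qed
  then show ?thesis by blast
qed


lemma floor_approx_integral: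
  fixes W Y :: "'a \<Rightarrow> real" and d C :: real
  assumes d: "d > 0" and Wi: "integrable M W" and Wp: "\<forall>x\<in>space M. 0 \<le> W x"
    and Ym[measurable]: "Y \<in> borel_measurable M" and Yb: "\<forall>x\<in>space M. \<bar>Y x\<bar> \<le> C"
  defines "S \<equiv> {-(ceiling (C/d) + 1) .. ceiling (C/d) + 1}"
  defines "A \<equiv> (\<lambda>n::int. {x\<in>space M. floor (Y x / d) = n})"
  shows "\<bar>(\<integral>x. Y x * W x \<partial>M) - (\<Sum>n\<in>S. d * of_int n * (\<integral>x. indicator (A n) x * W x \<partial>M))\<bar>
          \<le> d * (\<integral>x. W x \<partial>M)"
proof -
  have Wm[measurable]: "W \<in> borel_measurable M" using Wi by auto
  have Am[measurable]: "A n \<in> sets M" for n unfolding A_def by measurable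
  define s where "s x = d * of_int (floor (Y x / d))" for x
  have sm[measurable]: "s \<in> borel_measurable M" unfolding s_def by measurable
  have fl: "d * of_int (floor (Y x / d)) \<le> Y x \<and> Y x < d * of_int (floor (Y x / d)) + d" for x
  proof -
    have a: "of_int (floor (Y x / d)) \<le> Y x / d" "Y x / d < of_int (floor (Y x / d)) + 1"
      by linarith+
    have "of_int (floor (Y x / d)) * d \<le> Y x" using a(1) pos_le_divide_eq[OF d] by blast
    moreover have "Y x < (of_int (floor (Y x / d)) + 1) * d"
      using a(2) pos_divide_less_eq[OF d] by blast
    ultimately show ?thesis by (simp add: algebra_simps)
  qed
  have inS: "floor (Y x / d) \<in> S" if "x \<in> space M" for x
  proof -
    have "\<bar>Y x\<bar> \<le> C" using Yb that by auto
    then have "Y x \<le> C" "-C \<le> Y x" by auto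
    then have "Y x / d \<le> C / d" "(- C)/d \<le> Y x / d" using d
      by (metis divide_right_mono less_imp_le)+
    then show ?thesis unfolding S_def by (simp; linarith)
  qed
  have YWi: "integrable M (\<lambda>x. Y x * W x)"
    by (rule Bochner_Integration.integrable_bound[of _ "\<lambda>x. C * W x"]) (use Wi Wp Yb in \<open>auto simp: abs_mult intro!: mult_right_mono AE_I2\<close>)
  have sWi: "integrable M (\<lambda>x. s x * W x)"
  proof (rule Bochner_Integration.integrable_bound[of _ "\<lambda>x. (C + d) * W x"])
    show "integrable M (\<lambda>x. (C + d) * W x)" using Wi by auto
    show "(\<lambda>x. s x * W x) \<in> borel_measurable M" by measurable
    show "AE x in M. norm (s x * W x) \<le> norm ((C + d) * W x)"
    proof (rule AE_I2)
      fix x assume x: "x \<in> space M"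
      have "\<bar>s x\<bar> \<le> C + d" using fl[of x] Yb x unfolding s_def by (auto simp: abs_le_iff)
      then have "\<bar>s x\<bar> * W x \<le> (C + d) * W x" using Wp x by (intro mult_right_mono) auto
      moreover have "0 \<le> C" using Yb x by (meson abs_ge_zero order_trans)
      ultimately show "norm (s x * W x) \<le> norm ((C + d) * W x)" using Wp x d by (simp add: abs_mult)
    qed
  qed
  have sum_eq: "(\<integral>x. s x * W x \<partial>M) = (\<Sum>n\<in>S. d * of_int n * (\<integral>x. indicator (A n) x * W x \<partial>M))"
  proof -
    have "(\<integral>x. s x * W x \<partial>M) = (\<integral>x. (\<Sum>n\<in>S. d * of_int n * (indicator (A n) x * W x)) \<partial>M)"
    proof (rule Bochner_Integration.integral_cong[OF refl])
      fix x assume x: "x \<in> space M"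
      have "(\<Sum>n\<in>S. d * of_int n * (indicator (A n) x * W x))
          = (\<Sum>n\<in>S. if floor (Y x / d) = n then d * of_int n * W x else 0)"
        using x unfolding A_def by (intro sum.cong) (auto simp: indicator_def)
      also have "\<dots> = d * of_int (floor (Y x / d)) * W x"
        using inS[OF x] unfolding S_def by (simp add: sum.delta)
      finally show "s x * W x = (\<Sum>n\<in>S. d * of_int n * (indicator (A n) x * W x))"
        unfolding s_def by simp
    qed
    also have "\<dots> = (\<Sum>n\<in>S. d * of_int n * (\<integral>x. indicator (A n) x * W x \<partial>M))"
      using integrable_mult_indicator[OF Am Wi]
      by (subst Bochner_Integration.integral_sum) auto
    finally show ?thesis .
  qed
  have "(\<integral>x. Y x * W x \<partial>M) - (\<integral>x. s x * W x \<partial>M) = (\<integral>x. (Y x - s x) * W x \<partial>M)"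
    using YWi sWi by (simp add: left_diff_distrib)
  moreover have "0 \<le> (\<integral>x. (Y x - s x) * W x \<partial>M)"
    using fl Wp unfolding s_def by (intro integral_nonneg_AE AE_I2) auto
  moreover have "(\<integral>x. (Y x - s x) * W x \<partial>M) \<le> (\<integral>x. d * W x \<partial>M)"
  proof (rule integral_mono)
    show "integrable M (\<lambda>x. (Y x - s x) * W x)" using YWi sWi by (simp add: left_diff_distrib)
    show "integrable M (\<lambda>x. d * W x)" using Wi by simp
    fix x assume x: "x \<in> space M"
    have "Y x - s x \<le> d" using fl[of x] unfolding s_def by simp
    then show "(Y x - s x) * W x \<le> d * W x" using Wp x by (intro mult_right_mono) auto
  qed
  ultimately show ?thesis using sum_eq by simp
qed

lemma Y_approx:
  fixes X :: "'i \<Rightarrow> 'a \<Rightarrow> real" and Y Z :: "'a \<Rightarrow> real"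
  assumes Xgood: "eventually (\<lambda>i. integrable M (X i) \<and> (\<forall>x\<in>space M. 0 \<le> X i x) \<and> (\<integral>x. X i x \<partial>M) \<le> K) U"
    and Zi: "integrable M Z" and Zp: "\<forall>x\<in>space M. 0 \<le> Z x"
    and conv: "\<And>A. A \<in> sets M \<Longrightarrow> ((\<lambda>i. \<integral>x. indicator A x * X i x \<partial>M) \<longlongrightarrow> (\<integral>x. indicator A x * Z x \<partial>M)) U"
    and Ym[measurable]: "Y \<in> borel_measurable M" and Yb: "\<forall>x\<in>space M. \<bar>Y x\<bar> \<le> C"
  shows "((\<lambda>i. \<integral>x. Y x * X i x \<partial>M) \<longlongrightarrow> (\<integral>x. Y x * Z x \<partial>M)) U"
  unfolding tendsto_iff
proof (intro allI impI)
  fix e :: real assume e: "e > 0"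
  define K' where "K' = max K 0"
  define I where "I = (\<integral>x. Z x \<partial>M)"
  have I0: "0 \<le> I" unfolding I_def using Zp by (intro integral_nonneg_AE AE_I2) auto
  have K'0: "0 \<le> K'" unfolding K'_def by simp
  define d where "d = e / (K' + I + 2)"
  have d: "d > 0" unfolding d_def using e I0 K'0 by simp
  have de: "d * (K' + I + 1) < e"
  proof -
    have "d * (K' + I + 2) = e" unfolding d_def using I0 K'0 by simp
    then show ?thesis using d by (smt (verit) mult_less_cancel_left)
  qed
  define S where "S \<equiv> {-(ceiling (C/d) + 1) .. ceiling (C/d) + 1}"
  define A where "A \<equiv> (\<lambda>n::int. {x\<in>space M. floor (Y x / d) = n})"
  have Am[measurable]: "A n \<in> sets M" for n unfolding A_def by measurable
  have cs: "((\<lambda>i. \<Sum>n\<in>S. d * of_int n * (\<integral>x. indicator (A n) x * X i x \<partial>M)) \<longlongrightarrow>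
     (\<Sum>n\<in>S. d * of_int n * (\<integral>x. indicator (A n) x * Z x \<partial>M))) U"
    by (intro tendsto_intros conv Am)
  then have ev: "eventually (\<lambda>i. dist (\<Sum>n\<in>S. d * of_int n * (\<integral>x. indicator (A n) x * X i x \<partial>M))
     (\<Sum>n\<in>S. d * of_int n * (\<integral>x. indicator (A n) x * Z x \<partial>M)) < d) U"
    using d unfolding tendsto_iff by blast
  have bZ: "\<bar>(\<integral>x. Y x * Z x \<partial>M) - (\<Sum>n\<in>S. d * of_int n * (\<integral>x. indicator (A n) x * Z x \<partial>M))\<bar> \<le> d * I"
    unfolding I_def S_def A_def by (rule floor_approx_integral[OF d Zi Zp Ym Yb])
  show "eventually (\<lambda>i. dist (\<integral>x. Y x * X i x \<partial>M) (\<integral>x. Y x * Z x \<partial>M) < e) U"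
    using ev Xgood
  proof (eventually_elim)
    case (elim i)
    have bX: "\<bar>(\<integral>x. Y x * X i x \<partial>M) - (\<Sum>n\<in>S. d * of_int n * (\<integral>x. indicator (A n) x * X i x \<partial>M))\<bar> \<le> d * (\<integral>x. X i x \<partial>M)"
      unfolding S_def A_def using elim(2) by (intro floor_approx_integral[OF d _ _ Ym Yb]) auto
    have "d * (\<integral>x. X i x \<partial>M) \<le> d * K'" using elim(2) d unfolding K'_def
      by (intro mult_left_mono) auto
    then show ?case using bX bZ elim(1) de unfolding dist_real_def by (simp add: algebra_simps)
  qed
qed


lemma cond_exp_ind:
  fixes W :: "'a \<Rightarrow> real"
  assumes fin: "finite_measure M" and sub: "subalgebra M B" and A[measurable]: "A \<in> sets M"
    and Wi: "integrable M W"
  shows "(LINT x:A|M. real_cond_exp M B W x)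
      = (\<integral>x. max 0 (min 1 (real_cond_exp M B (indicator A) x)) * W x \<partial>M)"
proof -
  interpret finite_measure_subalgebra M B
    using fin sub unfolding finite_measure_subalgebra_def finite_measure_subalgebra_axioms_def by auto
  define E where "E = real_cond_exp M B (indicator A)"
  have Wm[measurable]: "W \<in> borel_measurable M" using Wi by auto
  have EB[measurable]: "E \<in> borel_measurable B" unfolding E_def by simp
  have EM[measurable]: "E \<in> borel_measurable M" unfolding E_def by simp
  have Ai: "integrable M (indicator A :: 'a \<Rightarrow> real)" by (simp add: less_top[symmetric])
  have c1: "integrable M (\<lambda>x. 1::real)" by simp
  have E0: "AE x in M. 0 \<le> E x" unfolding E_def by (rule real_cond_exp_pos) auto
  have "AE x in M. E x \<le> real_cond_exp M B (\<lambda>x. 1) x" unfolding E_def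
    by (rule real_cond_exp_mono[OF _ Ai c1]) (auto simp: indicator_def)
  moreover have "AE x in M. real_cond_exp M B (\<lambda>x. 1) x = 1"
    by (rule real_cond_exp_F_meas[OF c1]) simp
  ultimately have E1: "AE x in M. E x \<le> 1" by eventually_elim auto
  have EC: "AE x in M. max 0 (min 1 (E x)) = E x" using E0 E1 by eventually_elim auto
  have CWi: "integrable M (real_cond_exp M B W)" by (rule real_cond_exp_int(1)[OF Wi])
  have EWi: "integrable M (\<lambda>x. E x * W x)"
    by (rule Bochner_Integration.integrable_bound[OF Wi]) (use E0 E1 in \<open>auto simp: abs_mult intro!: mult_left_le_one_le\<close>)
  have "(LINT x:A|M. real_cond_exp M B W x) = (\<integral>x. real_cond_exp M B W x * indicator A x \<partial>M)"
    by (simp add: set_lebesgue_integral_def mult.commute)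
  also have "\<dots> = (\<integral>x. real_cond_exp M B W x * E x \<partial>M)"
    unfolding E_def
    by (rule real_cond_exp_intg(2)[symmetric]) (auto intro: integrable_real_mult_indicator[OF A CWi])
  also have "\<dots> = (\<integral>x. E x * real_cond_exp M B W x \<partial>M)" by (simp add: mult.commute)
  also have "\<dots> = (\<integral>x. E x * W x \<partial>M)"
    by (rule real_cond_exp_intg(2)[OF EWi EB Wm])
  also have "\<dots> = (\<integral>x. max 0 (min 1 (E x)) * W x \<partial>M)"
    by (rule integral_cong_AE) (use EC in auto)
  finally show ?thesis unfolding E_def .
qed

lemma cond_exp_ind_bd:
  assumes sub: "subalgebra M B" 
  shows "(\<lambda>x. max 0 (min 1 (real_cond_exp M B (indicator A) x))) \<in> borel_measurable M"
    "\<forall>x\<in>space M. \<bar>max 0 (min 1 (real_cond_exp M B (indicator A) x))\<bar> \<le> (1::real)"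
  by (auto intro!: borel_measurable_max borel_measurable_min measurable_from_subalg[OF sub] borel_measurable_cond_exp)


lemma UI_lemma:
  fixes M :: "'a measure" and X :: "'i \<Rightarrow> 'a \<Rightarrow> real"
  assumes fin: "finite_measure M"
    and internal: "eventually (\<lambda>i. X i \<in> borel_measurable M \<and> (\<forall>x\<in>space M. 0 \<le> X i x)) U"
    and unif: "\<forall>e::real>0. \<exists>k::real. eventually (\<lambda>i.
        (\<integral>\<^sup>+x\<in>{x\<in>space M. k \<le> X i x}. ennreal (X i x) \<partial>M) < ennreal e) U"
    and e: "e > 0"
  shows "\<exists>k\<ge>0. eventually (\<lambda>i. X i \<in> borel_measurable M \<and> (\<forall>x\<in>space M. 0 \<le> X i x) \<and> integrable M (X i)
     \<and> (\<forall>A\<in>sets M. (\<integral>x. indicator A x * X i x \<partial>M) \<le> k * measure M A + e)) U"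
proof -
  interpret finite_measure M by (rule fin)
  obtain k where ev: "eventually (\<lambda>i.
        (\<integral>\<^sup>+x\<in>{x\<in>space M. k \<le> X i x}. ennreal (X i x) \<partial>M) < ennreal e) U"
    using unif e by blast
  define k' where "k' = max k 0"
  have k'0: "0 \<le> k'" unfolding k'_def by simp
  have "eventually (\<lambda>i. X i \<in> borel_measurable M \<and> (\<forall>x\<in>space M. 0 \<le> X i x) \<and> integrable M (X i)
     \<and> (\<forall>A\<in>sets M. (\<integral>x. indicator A x * X i x \<partial>M) \<le> k' * measure M A + e)) U"
    using ev internal
  proof eventually_elim
    case (elim i)
    have Xm[measurable]: "X i \<in> borel_measurable M" and Xp: "\<forall>x\<in>space M. 0 \<le> X i x" using elim by auto
    define S where "S = {x\<in>space M. k \<le> X i x}"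
    have Sm[measurable]: "S \<in> sets M" unfolding S_def by measurable
    have nnS: "(\<integral>\<^sup>+x. ennreal (X i x) * indicator S x \<partial>M) < ennreal e" using elim(1) unfolding S_def by simp
    have key: "(\<integral>\<^sup>+x. ennreal (indicator A x * X i x) \<partial>M) \<le> ennreal (k' * measure M A + e)"
      if A[measurable]: "A \<in> sets M" for A
    proof -
      have "(\<integral>\<^sup>+x. ennreal (indicator A x * X i x) \<partial>M)
          \<le> (\<integral>\<^sup>+x. ennreal k' * indicator A x + ennreal (X i x) * indicator S x \<partial>M)"
      proof (rule nn_integral_mono)
        fix x assume x: "x \<in> space M"
        show "ennreal (indicator A x * X i x) \<le> ennreal k' * indicator A x + ennreal (X i x) * indicator S x"
        proof (cases "x \<in> A")
          case True
          show ?thesis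
          proof (cases "x \<in> S")
            case True
            then show ?thesis using \<open>x \<in> A\<close> by (simp add: add_increasing)
          next
            case False
            then have "X i x \<le> k'" using x unfolding S_def k'_def by auto
            then show ?thesis using \<open>x \<in> A\<close> False by (simp add: ennreal_leI)
          qed
        qed simp
      qed
      also have "\<dots> = ennreal k' * emeasure M A + (\<integral>\<^sup>+x. ennreal (X i x) * indicator S x \<partial>M)"
        by (subst nn_integral_add) (auto simp: nn_integral_cmult_indicator)
      also have "\<dots> \<le> ennreal (k' * measure M A) + ennreal e"
        using nnS k'0 by (intro add_mono) (auto simp: emeasure_eq_measure ennreal_mult)
      also have "\<dots> = ennreal (k' * measure M A + e)" using k'0 e by (simp add: ennreal_plus)
      finally show ?thesis .
    qed
    have nn_sp: "(\<integral>\<^sup>+x. ennreal (X i x) \<partial>M) = (\<integral>\<^sup>+x. ennreal (indicator (space M) x * X i x) \<partial>M)"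
      by (rule nn_integral_cong) simp
    have Xi: "integrable M (X i)"
      by (rule integrableI_nonneg) (use Xp key[OF sets.top] nn_sp in \<open>auto simp: AE_I2 less_top[symmetric] top_unique\<close>)
    have "(\<integral>x. indicator A x * X i x \<partial>M) \<le> k' * measure M A + e" if A[measurable]: "A \<in> sets M" for A
    proof -
      have "(\<integral>x. indicator A x * X i x \<partial>M) = enn2real (\<integral>\<^sup>+x. ennreal (indicator A x * X i x) \<partial>M)"
        using Xp by (intro integral_eq_nn_integral AE_I2) auto
      also have "\<dots> \<le> enn2real (ennreal (k' * measure M A + e))"
        by (rule enn2real_mono[OF key[OF A]]) simp
      also have "\<dots> = k' * measure M A + e"
        by (rule enn2real_ennreal) (use k'0 e in simp)
      finally show ?thesis .
    qed
    then show ?case using Xi Xp by auto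
  qed
  then show ?thesis using k'0 by blast
qed


theorem lemma1:
  fixes M B :: "'a measure" and U :: "'i filter" and X :: "'i \<Rightarrow> 'a \<Rightarrow> real"
  assumes ultra: "is_ultrafilter U"
    and fin: "finite_measure M"
    and sub: "subalgebra M B"
    and internal: "eventually (\<lambda>i. X i \<in> borel_measurable M \<and> (\<forall>x\<in>space M. 0 \<le> X i x)) U"
    and unif: "\<forall>e::real>0. \<exists>k::real. eventually (\<lambda>i.
        (\<integral>\<^sup>+x\<in>{x\<in>space M. k \<le> X i x}. ennreal (X i x) \<partial>M) < ennreal e) U"
  shows "\<exists>Xinf. (\<lambda>Z. Z \<in> borel_measurable M \<and> integrable M Z \<and> (\<forall>x\<in>space M. 0 \<le> Z x)
        \<and> (\<forall>A\<in>sets M. ns_approx U (LINT x:A|M. Z x) (\<lambda>i. LINT x:A|M. X i x))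
        \<and> (\<forall>A\<in>sets M. \<forall>Y. Y \<in> borel_measurable M \<and> (\<exists>C. \<forall>x\<in>space M. \<bar>Y x\<bar> \<le> C) \<longrightarrow>
             ns_approx U (LINT x:A|M. Y x * Z x) (\<lambda>i. LINT x:A|M. Y x * X i x))
        \<and> (\<forall>A\<in>sets M. ns_approx U (LINT x:A|M. real_cond_exp M B Z x)
             (\<lambda>i. LINT x:A|M. real_cond_exp M B (X i) x))) Xinf
      \<and> (\<forall>Z. (Z \<in> borel_measurable M \<and> integrable M Z \<and> (\<forall>x\<in>space M. 0 \<le> Z x)
        \<and> (\<forall>A\<in>sets M. ns_approx U (LINT x:A|M. Z x) (\<lambda>i. LINT x:A|M. X i x))
        \<and> (\<forall>A\<in>sets M. \<forall>Y. Y \<in> borel_measurable M \<and> (\<exists>C. \<forall>x\<in>space M. \<bar>Y x\<bar> \<le> C) \<longrightarrow>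
             ns_approx U (LINT x:A|M. Y x * Z x) (\<lambda>i. LINT x:A|M. Y x * X i x))
        \<and> (\<forall>A\<in>sets M. ns_approx U (LINT x:A|M. real_cond_exp M B Z x)
             (\<lambda>i. LINT x:A|M. real_cond_exp M B (X i) x)))
        \<longrightarrow> (AE x in M. Z x = Xinf x))"
proof -
  interpret finite_measure M by (rule fin)
  have Ub: "U \<noteq> bot" using ultra unfolding is_ultrafilter_def by auto
  have UI: "\<And>e. e > 0 \<Longrightarrow> \<exists>k\<ge>0. eventually (\<lambda>i. X i \<in> borel_measurable M \<and> (\<forall>x\<in>space M. 0 \<le> X i x) \<and> integrable M (X i)
     \<and> (\<forall>A\<in>sets M. (\<integral>x. indicator A x * X i x \<partial>M) \<le> k * measure M A + e)) U"
    by (rule UI_lemma[OF fin internal unif])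
  obtain k1 where k1: "k1 \<ge> 0" "eventually (\<lambda>i. X i \<in> borel_measurable M \<and> (\<forall>x\<in>space M. 0 \<le> X i x) \<and> integrable M (X i)
     \<and> (\<forall>A\<in>sets M. (\<integral>x. indicator A x * X i x \<partial>M) \<le> k1 * measure M A + 1)) U"
    using UI[of 1] by auto
  define K where "K = k1 * measure M (space M) + 1"
  have good: "eventually (\<lambda>i. X i \<in> borel_measurable M \<and> (\<forall>x\<in>space M. 0 \<le> X i x) \<and> integrable M (X i)
     \<and> (\<forall>A\<in>sets M. 0 \<le> (\<integral>x. indicator A x * X i x \<partial>M) \<and> (\<integral>x. indicator A x * X i x \<partial>M) \<le> K)) U"
    using k1(2)
  proof eventually_elim
    case (elim i)
    have "(\<integral>x. indicator A x * X i x \<partial>M) \<le> K" if "A \<in> sets M" for A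
    proof -
      have "k1 * measure M A \<le> k1 * measure M (space M)" by (intro mult_left_mono bounded_measure k1(1))
      then show ?thesis using elim that unfolding K_def by force
    qed
    moreover have "0 \<le> (\<integral>x. indicator A x * X i x \<partial>M)" for A
      using elim by (intro integral_nonneg_AE AE_I2) auto
    ultimately show ?case using elim by auto
  qed
  have good2: "eventually (\<lambda>i. integrable M (X i) \<and> (\<forall>x\<in>space M. 0 \<le> X i x) \<and> (\<integral>x. X i x \<partial>M) \<le> K) U"
    using good
  proof eventually_elim
    case (elim i)
    have "(\<integral>x. X i x \<partial>M) = (\<integral>x. indicator (space M) x * X i x \<partial>M)"
      by (rule Bochner_Integration.integral_cong) auto
    then show ?case using elim by auto
  qed
  define L where "L A = Lim U (\<lambda>i. \<integral>x. indicator A x * X i x \<partial>M)" for A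
  have conv: "((\<lambda>i. \<integral>x. indicator A x * X i x \<partial>M) \<longlongrightarrow> L A) U" if "A \<in> sets M" for A
  proof -
    have "eventually (\<lambda>i. \<bar>\<integral>x. indicator A x * X i x \<partial>M\<bar> \<le> K) U"
      using good by eventually_elim (use that in auto)
    from ultra_lim_exists[OF ultra this] obtain r where r: "((\<lambda>i. \<integral>x. indicator A x * X i x \<partial>M) \<longlongrightarrow> r) U"
      by blast
    then have "L A = r" unfolding L_def using Ub by (intro tendsto_Lim) auto
    then show ?thesis using r by simp
  qed
  have Lnn: "0 \<le> L A" if "A \<in> sets M" for A
  proof (rule tendsto_le[OF _ conv[OF that] tendsto_const])
    show "U \<noteq> bot" by (rule Ub)
    show "eventually (\<lambda>i. 0 \<le> (\<integral>x. indicator A x * X i x \<partial>M)) U"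
      using good by eventually_elim (use that in auto)
  qed
  have Lbd: "\<exists>k\<ge>0. \<forall>A\<in>sets M. L A \<le> k * measure M A + e" if e: "e > 0" for e
  proof -
    obtain k where k: "k \<ge> 0" "eventually (\<lambda>i. X i \<in> borel_measurable M \<and> (\<forall>x\<in>space M. 0 \<le> X i x) \<and> integrable M (X i)
     \<and> (\<forall>A\<in>sets M. (\<integral>x. indicator A x * X i x \<partial>M) \<le> k * measure M A + e)) U"
      using UI[OF e] by auto
    have "L A \<le> k * measure M A + e" if A: "A \<in> sets M" for A
    proof (rule tendsto_le[OF _ tendsto_const conv[OF A]])
      show "U \<noteq> bot" by (rule Ub)
      show "eventually (\<lambda>i. (\<integral>x. indicator A x * X i x \<partial>M) \<le> k * measure M A + e) U"
        using k(2) by eventually_elim (use A in auto)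
    qed
    then show ?thesis using k(1) by blast
  qed
  have Ladd: "L (A \<union> C) = L A + L C" if A: "A \<in> sets M" and C: "C \<in> sets M" and dis: "A \<inter> C = {}" for A C
  proof -
    have "((\<lambda>i. \<integral>x. indicator (A \<union> C) x * X i x \<partial>M) \<longlongrightarrow> L A + L C) U"
    proof -
      have t: "((\<lambda>i. (\<integral>x. indicator A x * X i x \<partial>M) + (\<integral>x. indicator C x * X i x \<partial>M)) \<longlongrightarrow> L A + L C) U"
        by (intro tendsto_add conv A C)
      have "eventually (\<lambda>i. (\<integral>x. indicator A x * X i x \<partial>M) + (\<integral>x. indicator C x * X i x \<partial>M)
          = (\<integral>x. indicator (A \<union> C) x * X i x \<partial>M)) U"
        using good
      proof eventually_elim
        case (elim i)
        then have Xi: "integrable M (X i)" by auto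
        have "(\<integral>x. indicator (A \<union> C) x * X i x \<partial>M) = (\<integral>x. indicator A x * X i x + indicator C x * X i x \<partial>M)"
          using dis by (simp add: indicator_disj_union distrib_right)
        also have "\<dots> = (\<integral>x. indicator A x * X i x \<partial>M) + (\<integral>x. indicator C x * X i x \<partial>M)"
          using integrable_mult_indicator[OF A Xi] integrable_mult_indicator[OF C Xi] by simp
        finally show ?case by simp
      qed
      then show ?thesis by (rule Lim_transform_eventually[OF t])
    qed
    moreover have "A \<union> C \<in> sets M" using A C by auto
    ultimately show ?thesis using conv tendsto_unique[OF Ub] by blast
  qed
  have Lempty: "L {} = 0"
  proof -
    have "((\<lambda>i. \<integral>x. indicator {} x * X i x \<partial>M) \<longlongrightarrow> 0) U" by simp
    then show ?thesis using conv[of "{}"] tendsto_unique[OF Ub] by auto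
  qed
  have Lcont: "(\<lambda>n. L (An n)) \<longlonglongrightarrow> 0" if An: "range An \<subseteq> sets M" "decseq An" "(\<Inter>i. An i) = {}" for An
    unfolding tendsto_iff
  proof (intro allI impI)
    fix e :: real assume e: "e > 0"
    obtain k where k: "k \<ge> 0" "\<forall>A\<in>sets M. L A \<le> k * measure M A + e/2" using Lbd[of "e/2"] e by auto
    have "(\<lambda>n. measure M (An n)) \<longlonglongrightarrow> measure M (\<Inter>i. An i)"
      using An by (intro Lim_measure_decseq) auto
    then have "(\<lambda>n. k * measure M (An n)) \<longlonglongrightarrow> 0" using An(3) by (auto intro: tendsto_mult_right_zero)
    then have "eventually (\<lambda>n. dist (k * measure M (An n)) 0 < e/2) sequentially"
      using e unfolding tendsto_iff by (metis half_gt_zero)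
    then show "eventually (\<lambda>n. dist (L (An n)) 0 < e) sequentially"
    proof eventually_elim
      case (elim n)
      have "An n \<in> sets M" using An by auto
      then show ?case using elim k Lnn[of "An n"] by (auto simp: dist_real_def)
    qed
  qed
  define \<nu> where "\<nu> A = ennreal (L A)" for A
  have pos: "positive (sets M) \<nu>" unfolding positive_def \<nu>_def using Lempty by simp
  have add: "additive (sets M) \<nu>" unfolding additive_def \<nu>_def
    using Ladd Lnn by (auto simp: ennreal_plus)
  have ca: "countably_additive (sets M) \<nu>"
  proof (rule sets.empty_continuous_imp_countably_additive[OF pos add])
    show "\<forall>A\<in>sets M. \<nu> A \<noteq> \<infinity>" unfolding \<nu>_def by simp
    fix An :: "nat \<Rightarrow> 'a set" assume An: "range An \<subseteq> sets M" "decseq An" "(\<Inter>i. An i) = {}"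
    show "(\<lambda>i. \<nu> (An i)) \<longlonglongrightarrow> 0" unfolding \<nu>_def
      using tendsto_ennrealI[OF Lcont[OF An]] by simp
  qed
  define N where "N = measure_of (space M) (sets M) \<nu>"
  have emN: "emeasure N A = ennreal (L A)" if "A \<in> sets M" for A
    unfolding N_def using emeasure_measure_of_sigma[OF sets.sigma_algebra_axioms pos ca that]
    by (simp add: \<nu>_def)
  have setsN: "sets N = sets M" unfolding N_def by simp
  have ac: "absolutely_continuous M N"
    unfolding absolutely_continuous_def
  proof
    fix A assume A: "A \<in> null_sets M"
    then have As: "A \<in> sets M" and m0: "measure M A = 0" by (auto simp: null_sets_def emeasure_eq_measure)
    have "L A \<le> 0"
    proof (rule field_le_epsilon)
      fix e :: real assume "e > 0"
      then obtain k where "\<forall>A\<in>sets M. L A \<le> k * measure M A + e" using Lbd by blast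
      then show "L A \<le> 0 + e" using As m0 by auto
    qed
    then have "L A = 0" using Lnn[OF As] by simp
    then show "A \<in> null_sets N" using emN[OF As] As setsN by (simp add: null_sets_def)
  qed
  obtain f where fm[measurable]: "f \<in> borel_measurable M" and dens: "density M f = N"
    using Radon_Nikodym[OF ac setsN] by blast
  have fA: "(\<integral>\<^sup>+x. f x * indicator A x \<partial>M) = ennreal (L A)" if "A \<in> sets M" for A
    using emeasure_density[OF fm that] dens emN[OF that] by simp
  have ffin: "AE x in M. f x \<noteq> \<infinity>"
  proof (rule nn_integral_PInf_AE[OF fm])
    have "(\<integral>\<^sup>+x. f x \<partial>M) = (\<integral>\<^sup>+x. f x * indicator (space M) x \<partial>M)"
      by (rule nn_integral_cong) simp
    then show "integral\<^sup>N M f \<noteq> \<infinity>" using fA[OF sets.top] by simp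
  qed
  define Xinf where "Xinf x = enn2real (f x)" for x
  have Xm[measurable]: "Xinf \<in> borel_measurable M" unfolding Xinf_def by simp
  have Xp: "\<forall>x\<in>space M. 0 \<le> Xinf x" unfolding Xinf_def by simp
  have XnnA: "(\<integral>\<^sup>+x. ennreal (indicator A x * Xinf x) \<partial>M) = ennreal (L A)" if A: "A \<in> sets M" for A
  proof -
    have "(\<integral>\<^sup>+x. ennreal (indicator A x * Xinf x) \<partial>M) = (\<integral>\<^sup>+x. f x * indicator A x \<partial>M)"
      using ffin by (intro nn_integral_cong_AE) (auto simp: Xinf_def indicator_def less_top[symmetric])
    then show ?thesis using fA[OF A] by simp
  qed
  have XA: "(\<integral>x. indicator A x * Xinf x \<partial>M) = L A" if A: "A \<in> sets M" for A
  proof -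
    have "(\<integral>x. indicator A x * Xinf x \<partial>M) = enn2real (\<integral>\<^sup>+x. ennreal (indicator A x * Xinf x) \<partial>M)"
      using Xp A by (intro integral_eq_nn_integral AE_I2) auto
    then show ?thesis using XnnA[OF A] Lnn[OF A] by simp
  qed
  have Xint: "integrable M Xinf"
  proof (rule integrableI_nonneg[OF Xm])
    show "AE x in M. 0 \<le> Xinf x" using Xp by auto
    have "(\<integral>\<^sup>+x. ennreal (Xinf x) \<partial>M) = (\<integral>\<^sup>+x. ennreal (indicator (space M) x * Xinf x) \<partial>M)"
      by (rule nn_integral_cong) simp
    then show "(\<integral>\<^sup>+x. ennreal (Xinf x) \<partial>M) < \<infinity>" using XnnA[OF sets.top] by simp
  qed
  have lint: "(LINT x:A|M. g x) = (\<integral>x. indicator A x * g x \<partial>M)" for A and g :: "'a \<Rightarrow> real"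
    by (simp add: set_lebesgue_integral_def)
  have convZ: "((\<lambda>i. \<integral>x. indicator A x * X i x \<partial>M) \<longlongrightarrow> (\<integral>x. indicator A x * Xinf x \<partial>M)) U"
    if "A \<in> sets M" for A using conv[OF that] XA[OF that] by simp
  have P1: "\<forall>A\<in>sets M. ns_approx U (LINT x:A|M. Xinf x) (\<lambda>i. LINT x:A|M. X i x)"
    unfolding ns_approx_iff lint using convZ by blast
  have P2: "\<forall>A\<in>sets M. \<forall>Y. Y \<in> borel_measurable M \<and> (\<exists>C. \<forall>x\<in>space M. \<bar>Y x\<bar> \<le> C) \<longrightarrow>
             ns_approx U (LINT x:A|M. Y x * Xinf x) (\<lambda>i. LINT x:A|M. Y x * X i x)"
  proof (intro ballI allI impI)
    fix A and Y :: "'a \<Rightarrow> real" assume A: "A \<in> sets M" and Y: "Y \<in> borel_measurable M \<and> (\<exists>C. \<forall>x\<in>space M. \<bar>Y x\<bar> \<le> C)"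
    then obtain C where C: "\<forall>x\<in>space M. \<bar>Y x\<bar> \<le> C" by blast
    have Ym0[measurable]: "Y \<in> borel_measurable M" using Y by blast
    have Ym: "(\<lambda>x. indicator A x * Y x) \<in> borel_measurable M" using A by measurable
    have Cb: "\<forall>x\<in>space M. \<bar>indicator A x * Y x\<bar> \<le> C"
      using C by (auto simp: indicator_def intro: order_trans[OF abs_ge_zero])
    have "((\<lambda>i. \<integral>x. (indicator A x * Y x) * X i x \<partial>M) \<longlongrightarrow> (\<integral>x. (indicator A x * Y x) * Xinf x \<partial>M)) U"
      by (rule Y_approx[OF good2 Xint Xp convZ Ym Cb])
    then show "ns_approx U (LINT x:A|M. Y x * Xinf x) (\<lambda>i. LINT x:A|M. Y x * X i x)"
      unfolding ns_approx_iff lint by (simp add: mult.assoc)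
  qed
  have P3: "\<forall>A\<in>sets M. ns_approx U (LINT x:A|M. real_cond_exp M B Xinf x)
             (\<lambda>i. LINT x:A|M. real_cond_exp M B (X i) x)"
  proof
    fix A assume A: "A \<in> sets M"
    let ?Y = "\<lambda>x. max 0 (min 1 (real_cond_exp M B (indicator A) x))"
    have t: "((\<lambda>i. \<integral>x. ?Y x * X i x \<partial>M) \<longlongrightarrow> (\<integral>x. ?Y x * Xinf x \<partial>M)) U"
      by (rule Y_approx[OF good2 Xint Xp convZ cond_exp_ind_bd[OF sub]])
    have e: "eventually (\<lambda>i. (\<integral>x. ?Y x * X i x \<partial>M) = (LINT x:A|M. real_cond_exp M B (X i) x)) U"
      using good2 by eventually_elim (simp add: cond_exp_ind[OF fin sub A])
    have "((\<lambda>i. LINT x:A|M. real_cond_exp M B (X i) x) \<longlongrightarrow> (\<integral>x. ?Y x * Xinf x \<partial>M)) U"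
      by (rule Lim_transform_eventually[OF t e])
    then show "ns_approx U (LINT x:A|M. real_cond_exp M B Xinf x)
             (\<lambda>i. LINT x:A|M. real_cond_exp M B (X i) x)"
      unfolding ns_approx_iff using cond_exp_ind[OF fin sub A Xint] by simp
  qed
  have uniq: "AE x in M. Z x = Xinf x"
    if Zi: "integrable M Z" and ZA: "\<forall>A\<in>sets M. ns_approx U (LINT x:A|M. Z x) (\<lambda>i. LINT x:A|M. X i x)" for Z
  proof (rule density_unique_real[OF Zi Xint])
    fix A assume A: "A \<in> sets M"
    show "(LINT x:A|M. Z x) = (LINT x:A|M. Xinf x)"
      using ZA P1 A tendsto_unique[OF Ub] unfolding ns_approx_iff by blast
  qed
  show ?thesis
    apply (rule exI[of _ Xinf])
    using Xm Xint Xp P1 P2 P3 uniq by blast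
qed

end
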